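(* Let $f$ be a $(b,1)$-coloring of the Hamming graph $H(n,q)$. Then $b$ is divisible by $q-1$. Moreover, if $q=p^s$ for a prime $p$ and $s\ge1$, then $b+1=q^r$ for some positive integer $r$.
   Context: The Hamming graph $H(n,q)$ has vertex set $\mathbb{Z}_q^n$, two vertices adjacent iff they differ in exactly one coordinate. A perfect $2$-coloring is a surjective map $f$ from the vertices onto $\{1,2\}$ such that each vertex of color $i$ has exactly $s_{i,j}$ neighbours of color $j$ (constants depending only on $i,j$). A $(b,c)$-coloring of $H(n,q)$ is a perfect $2$-coloring with quotient matrix $\begin{pmatrix} n(q-1)-b & b\\ c & n(q-1)-c\end{pmatrix}$, i.e. every vertex of color 1 has exactly $b$ neighbours of color 2 and every vertex of color 2 has exactly $c$ neighbours of color 1. *)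

theory Defs
  imports "HOL-Computational_Algebra.Primes"
begin

definition hamming_vertices :: "nat \<Rightarrow> nat \<Rightarrow> nat list set" where
  "hamming_vertices n q = {x. length x = n \<and> set x \<subseteq> {0..<q}}"

definition hamming_adj :: "nat list \<Rightarrow> nat list \<Rightarrow> bool" where
  "hamming_adj x y \<longleftrightarrow> length x = length y \<and> card {i. i < length x \<and> x ! i \<noteq> y ! i} = 1"

definition nbr_count :: "nat \<Rightarrow> nat \<Rightarrow> (nat list \<Rightarrow> nat) \<Rightarrow> nat list \<Rightarrow> nat \<Rightarrow> nat" where
  "nbr_count n q f x j = card {y \<in> hamming_vertices n q. hamming_adj x y \<and> f y = j}"

text \<open>A (b,c)-coloring: a perfect 2-coloring (surjective onto {1,2}) with quotient matrix
  [[n(q-1)-b, b],[c, n(q-1)-c]].  Since every vertex has degree n(q-1), the diagonal entries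
  are determined by the off-diagonal ones.\<close>
definition bc_coloring :: "nat \<Rightarrow> nat \<Rightarrow> (nat list \<Rightarrow> nat) \<Rightarrow> nat \<Rightarrow> nat \<Rightarrow> bool" where
  "bc_coloring n q f b c \<longleftrightarrow>
     f ` hamming_vertices n q = {1, 2} \<and>
     (\<forall>x \<in> hamming_vertices n q. f x = 1 \<longrightarrow> nbr_count n q f x 2 = b \<and> nbr_count n q f x 1 = n * (q - 1) - b) \<and>
     (\<forall>x \<in> hamming_vertices n q. f x = 2 \<longrightarrow> nbr_count n q f x 1 = c \<and> nbr_count n q f x 2 = n * (q - 1) - c)"

end

theory Submission
  imports Defs "HOL-Number_Theory.Number_Theory"
begin

lemma adj_sym: "hamming_adj x y \<Longrightarrow> hamming_adj y x"
proof -
  assume a: "hamming_adj x y"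
  then have l: "length x = length y" unfolding hamming_adj_def by simp
  have "{i. i < length y \<and> y ! i \<noteq> x ! i} = {i. i < length x \<and> x ! i \<noteq> y ! i}" using l by auto
  then show ?thesis using a l unfolding hamming_adj_def by simp
qed

lemma adj_upd:
  assumes "i < length y" "a \<noteq> y!i"
  shows "hamming_adj y (y[i:=a])"
proof -
  have "{j. j < length y \<and> y ! j \<noteq> y[i:=a] ! j} = {i}"
    using assms by (auto simp: nth_list_update)
  then show ?thesis unfolding hamming_adj_def by simp
qed

lemma adj_dest:
  assumes "hamming_adj x y"
  shows "\<exists>i<length x. y!i \<noteq> x!i \<and> y = x[i := y!i]"
proof -
  have len: "length x = length y" using assms unfolding hamming_adj_def by simp
  have "card {i. i < length x \<and> x ! i \<noteq> y ! i} = 1" using assms unfolding hamming_adj_def by (rule conjunct2)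
  then obtain i where i: "{i. i < length x \<and> x ! i \<noteq> y ! i} = {i}" by (rule card_1_singletonE)
  have iin: "i < length x \<and> x ! i \<noteq> y ! i" using i by blast
  have oth: "x ! j = y ! j" if "j < length x" "j \<noteq> i" for j
  proof (rule ccontr)
    assume "x ! j \<noteq> y ! j"
    then have "j \<in> {i. i < length x \<and> x ! i \<noteq> y ! i}" using that by simp
    then show False using i that by simp
  qed
  have "y = x[i := y!i]"
  proof (rule nth_equalityI)
    show "length y = length (x[i := y!i])" using len by simp
    fix j assume "j < length y"
    then show "y ! j = x[i := y!i] ! j" using oth[of j] len iin
      by (cases "j = i") (simp_all add: nth_list_update)
  qed
  with iin show ?thesis by metis
qed

lemma upd_inj:
  assumes "i < length x" "j < length x" "a \<noteq> x!i" "a' \<noteq> x!j" "x[i:=a] = x[j:=a']"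
  shows "i = j \<and> a = a'"
proof -
  have "i = j"
  proof (rule ccontr)
    assume "i \<noteq> j"
    then have "x[i:=a] ! i = x[j:=a'] ! i" using assms(5) by simp
    then have "a = x ! i" using \<open>i\<noteq>j\<close> assms(1) by simp
    with assms(3) show False by simp
  qed
  moreover have "a = a'" using assms(5) \<open>i = j\<close> assms(1)
    by (metis nth_list_update_eq)
  ultimately show ?thesis by simp
qed

lemma upd_in_V:
  assumes "x \<in> hamming_vertices n q" "a < q"
  shows "x[i:=a] \<in> hamming_vertices n q"
  using assms set_update_subset_insert[of x i a] unfolding hamming_vertices_def by auto

lemma nt:
  fixes p s q b n :: nat
  assumes p: "prime p" and s: "s \<ge> 1" and q: "q = p ^ s"
    and d1: "b + 1 dvd q ^ n" and d2: "(q - 1) dvd b" and b: "b > 0"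
  shows "\<exists>r::nat. r > 0 \<and> b + 1 = q ^ r"
proof -
  have "q ^ n = p ^ (s * n)" using q by (simp add: power_mult)
  with d1 p obtain t where t: "b + 1 = p ^ t" using divides_primepow_nat by metis
  define u where "u = t div s"
  define v where "v = t mod s"
  have tuv: "p ^ t = p ^ v * q ^ u" unfolding u_def v_def q
    by (metis mult.commute power_add power_mult div_mult_mod_eq)
  have p2: "p \<ge> 2" using p by (simp add: prime_ge_2_nat)
  have q2: "q \<ge> 2" using q s p2
    by (metis le_trans one_le_power power_one_right power_increasing Suc_1 Suc_le_eq linorder_not_le not_numeral_le_zero one_le_numeral order_le_less)
  have cq: "[q = 1] (mod q - 1)"
    using q2 by (simp add: cong_altdef_nat)
  have "[q ^ u = 1 ^ u] (mod q - 1)" by (rule cong_pow[OF cq])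
  then have "[p ^ v * q ^ u = p ^ v * 1] (mod q - 1)" by (intro cong_mult cong_refl) simp
  moreover have "[b + 1 = 1] (mod q - 1)" using d2 by (simp add: cong_altdef_nat)
  ultimately have c: "[p ^ v = 1] (mod q - 1)" using t tuv
    by (metis cong_sym cong_trans mult.right_neutral)
  have v0: "v = 0"
  proof (rule ccontr)
    assume "v \<noteq> 0"
    then have "p ^ v \<ge> p" using p2 by (simp add: self_le_power)
    have "v < s" unfolding v_def using s by simp
    then have "p ^ v < p ^ s" using p2 by (simp add: power_strict_increasing)
    have "(q - 1) dvd p ^ v - 1" using c \<open>p ^ v \<ge> p\<close> p2 by (simp add: cong_altdef_nat)
    moreover have "p ^ v - 1 > 0" using \<open>p ^ v \<ge> p\<close> p2 by simp
    ultimately have "q - 1 \<le> p ^ v - 1" by (simp add: dvd_imp_le)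
    with \<open>p ^ v < p ^ s\<close> q \<open>p ^ v \<ge> p\<close> p2 show False by linarith
  qed
  have "b + 1 = q ^ u" using t tuv v0 by simp
  moreover have "u > 0" using b \<open>b + 1 = q ^ u\<close> by (cases u) auto
  ultimately show ?thesis by blast
qed

theorem proposition4:
  fixes n q b :: nat and f :: "nat list \<Rightarrow> nat"
  assumes "bc_coloring n q f b 1"
  shows "(q - 1) dvd b \<and>
         (\<forall>p s. prime p \<and> s \<ge> 1 \<and> q = p ^ s \<longrightarrow> (\<exists>r::nat. r > 0 \<and> b + 1 = q ^ r))"
proof -
  let ?V = "hamming_vertices n q"
  define C where "C = {x\<in>?V. f x = 1}"
  define W where "W = {x\<in>?V. f x = 2}"
  note bc = assms[unfolded bc_coloring_def]
  have img: "f ` ?V = {1,2}" using bc by blast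
  have fV: "\<And>x. x\<in>?V \<Longrightarrow> f x = 1 \<or> f x = 2" using img by blast
  have c1: "\<And>x. x\<in>C \<Longrightarrow> nbr_count n q f x 2 = b" using bc unfolding C_def by blast
  have c2: "\<And>y. y\<in>W \<Longrightarrow> nbr_count n q f y 1 = 1" using bc unfolding W_def by blast
  have Veq: "?V = {xs. set xs \<subseteq> {0..<q} \<and> length xs = n}" unfolding hamming_vertices_def by auto
  have finV: "finite ?V" unfolding Veq by (rule finite_lists_length_eq) simp
  have cardV: "card ?V = q ^ n" unfolding Veq by (subst card_lists_length_eq) simp_all
  have finC: "finite C" and finW: "finite W" using finV unfolding C_def W_def by auto
  have VCW: "?V = C \<union> W" "C \<inter> W = {}" using fV unfolding C_def W_def by auto
  have "card W = (\<Sum>y\<in>W. card {x\<in>C. hamming_adj x y})"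
  proof -
    have "card {x\<in>C. hamming_adj x y} = 1" if "y \<in> W" for y
    proof -
      have "{x\<in>C. hamming_adj x y} = {x \<in> ?V. hamming_adj y x \<and> f x = 1}"
        unfolding C_def using adj_sym by blast
      then show ?thesis using c2[OF that] unfolding nbr_count_def by simp
    qed
    then show ?thesis by simp
  qed
  also have "\<dots> = (\<Sum>y\<in>W. \<Sum>x\<in>{x\<in>C. hamming_adj x y}. 1)" by simp
  also have "\<dots> = (\<Sum>x\<in>C. \<Sum>y\<in>{y\<in>W. hamming_adj x y}. 1)"
    by (rule sum.swap_restrict[symmetric, OF finC finW])
  also have "\<dots> = (\<Sum>x\<in>C. b)"
  proof (rule sum.cong[OF refl])
    fix x assume "x \<in> C"
    have "{y\<in>W. hamming_adj x y} = {y \<in> ?V. hamming_adj x y \<and> f y = 2}"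
      unfolding W_def by blast
    then show "(\<Sum>y\<in>{y\<in>W. hamming_adj x y}. 1) = b" using c1[OF \<open>x\<in>C\<close>] unfolding nbr_count_def by simp
  qed
  finally have cW: "card W = b * card C" by simp
  have "card ?V = card C + card W"
    unfolding VCW(1) by (rule card_Un_disjoint[OF finC finW VCW(2)])
  then have qn: "q ^ n = (b + 1) * card C" using cardV cW by simp
  have "1 \<in> f ` ?V" unfolding img by simp
  then obtain x0 where "1 = f x0" "x0 \<in> ?V" by (rule imageE)
  then have x0: "x0 \<in> C" unfolding C_def by simp
  have "(q - 1) dvd b"
  proof -
    have x0V: "x0 \<in> ?V" using x0 unfolding C_def by simp
    have lenx: "length x0 = n" using x0V unfolding hamming_vertices_def by simp
    have x0q: "\<And>i. i < n \<Longrightarrow> x0 ! i < q" using x0V unfolding hamming_vertices_def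
      by (metis (mono_tags, lifting) atLeastLessThan_iff mem_Collect_eq nth_mem subset_iff)
    define S where "S i = {a. a < q \<and> a \<noteq> x0!i \<and> f (x0[i:=a]) = 2}" for i
    define N where "N = {y \<in> ?V. hamming_adj x0 y \<and> f y = 2}"
    have Neq: "N = (\<lambda>(i,a). x0[i:=a]) ` (SIGMA i:{..<n}. S i)"
    proof
      show "N \<subseteq> (\<lambda>(i,a). x0[i:=a]) ` (SIGMA i:{..<n}. S i)"
      proof
        fix y assume "y \<in> N"
        then have yV: "y \<in> ?V" and ad: "hamming_adj x0 y" and fy: "f y = 2" unfolding N_def by auto
        obtain i where i: "i < n" "y!i \<noteq> x0!i" "y = x0[i := y!i]" using adj_dest[OF ad] lenx by auto
        have "y ! i < q" using yV i(1) unfolding hamming_vertices_def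
          by (metis (mono_tags, lifting) atLeastLessThan_iff mem_Collect_eq nth_mem subset_iff)
        then have "y!i \<in> S i" unfolding S_def using i fy by simp
        then show "y \<in> (\<lambda>(i,a). x0[i:=a]) ` (SIGMA i:{..<n}. S i)"
          using i by (intro image_eqI[of _ _ "(i, y!i)"]) auto
      qed
    next
      show "(\<lambda>(i,a). x0[i:=a]) ` (SIGMA i:{..<n}. S i) \<subseteq> N"
        unfolding N_def S_def using upd_in_V[OF x0V] adj_upd lenx by auto
    qed
    have inj: "inj_on (\<lambda>(i,a). x0[i:=a]) (SIGMA i:{..<n}. S i)"
    proof (rule inj_onI)
      fix u w assume u: "u \<in> (SIGMA i:{..<n}. S i)" and w: "w \<in> (SIGMA i:{..<n}. S i)"
        and e: "(\<lambda>(i,a). x0[i:=a]) u = (\<lambda>(i,a). x0[i:=a]) w"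
      obtain i a where ia: "u = (i, a)" by (cases u)
      obtain j a' where ja: "w = (j, a')" by (cases w)
      have "i = j \<and> a = a'"
        by (rule upd_inj[of i x0 j a a']) (use u w e ia ja lenx in \<open>auto simp: S_def\<close>)
      then show "u = w" using ia ja by simp
    qed
    have finS: "\<And>i. finite (S i)" unfolding S_def by simp
    have "card N = (\<Sum>i<n. card (S i))"
      unfolding Neq using card_image[OF inj] card_SigmaI[of "{..<n}" S] finS by simp
    moreover have "(q - 1) dvd card (S i)" if "i < n" for i
    proof (cases "S i = {}")
      case True then show ?thesis by simp
    next
      case False
      then obtain a where a: "a \<in> S i" by blast
      have "S i = {0..<q} - {x0!i}"
      proof
        show "S i \<subseteq> {0..<q} - {x0!i}" unfolding S_def by auto
      next
        show "{0..<q} - {x0!i} \<subseteq> S i"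
        proof
          fix a' assume a': "a' \<in> {0..<q} - {x0!i}"
          show "a' \<in> S i"
          proof (cases "a' = a")
            case True then show ?thesis using a by simp
          next
            case False
            let ?y = "x0[i:=a]" and ?z = "x0[i:=a']"
            have ay: "a < q" "a \<noteq> x0!i" "f ?y = 2" using a unfolding S_def by auto
            have yW: "?y \<in> W" unfolding W_def using upd_in_V[OF x0V ay(1)] ay(3) by simp
            have zV: "?z \<in> ?V" using upd_in_V[OF x0V] a' by simp
            have adj1: "hamming_adj ?y x0"
              using adj_sym[OF adj_upd[of i x0 a]] ay(2) that lenx by simp
            have adj2: "hamming_adj ?y ?z"
              using adj_upd[of i ?y a'] False that lenx by simp
            have "f ?z \<noteq> 1"
            proof
              assume fz: "f ?z = 1"
              have ne: "?z \<noteq> x0" using a' that lenx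
                by (metis Diff_iff insertI1 nth_list_update_eq)
              have sub: "{x0, ?z} \<subseteq> {x \<in> ?V. hamming_adj ?y x \<and> f x = 1}"
                using x0 adj1 adj2 zV fz unfolding C_def by auto
              have "card {x0, ?z} \<le> card {x \<in> ?V. hamming_adj ?y x \<and> f x = 1}"
                by (rule card_mono[OF _ sub]) (use finV in auto)
              then show False using c2[OF yW] ne unfolding nbr_count_def by simp
            qed
            then have "f ?z = 2" using fV[OF zV] by blast
            then show ?thesis unfolding S_def using a' by simp
          qed
        qed
      qed
      then have "card (S i) = q - 1" using x0q[OF that] by simp
      then show ?thesis by simp
    qed
    ultimately have "(q - 1) dvd card N" by (metis dvd_sum lessThan_iff)
    moreover have "card N = b" using c1[OF x0] unfolding N_def nbr_count_def by simp
    ultimately show ?thesis by simp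
  qed
  moreover have "b > 0"
  proof (rule ccontr)
    assume "\<not> b > 0"
    then have "card W = 0" using cW by simp
    then have "W = {}" using finW by simp
    moreover have "2 \<in> f ` ?V" using img by simp
    ultimately show False unfolding W_def by auto
  qed
  moreover have "b + 1 dvd q ^ n" unfolding qn by (rule dvd_triv_left)
  ultimately show ?thesis using nt by blast
qed

end
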